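(* Let $h:\mathbb{R}^n \to \mathcal{Y}$ be a model with $\mathcal{Y} = \{\pm 1\}$, let $x\sim D$, let $g_1,g_2:\mathcal{X}\times\mathcal{Y} \to G$ be two EFs, and let $\epsilon,\epsilon_0,\epsilon_1,\alpha>0$ be constants. Assume that $g_1(x,h(x))$ and $g_2(x,h(x))$ $\epsilon$-intersect and denote by $\hat{g}(x,h(x))$ their $\epsilon$-union. If $g_1$ (or $g_2$) is $\epsilon_0$-valid with respect to $h$, then $\hat{g}$ is $\epsilon_0$-valid as well. Additionally, if $g_1$ (or $g_2$) is $(\epsilon_1,\alpha)$-complete with respect to $h$, then $\hat{g}$ is also $(\epsilon_1,\alpha)$-complete.
   Context: $D$ is a distribution supported on a discrete set $\mathcal{X}\subseteq\mathbb{R}^n$; $I(\cdot;\cdot)$ is Shannon mutual information of random variables that are functions of $x\sim D$; $\ell$ is a fixed loss function on $\mathcal{Y}\times\mathcal{Y}$. A function $q$ of $(x,h(x))$ with values in a set $Q$ is $\epsilon_0$-valid with respect to $h$ if there is $t:Q\to\mathcal{Y}$ with $\mathbb{E}_x[\ell(t(q(x,h(x))),h(x))]\le\epsilon_0$. Such $q$ is $(\epsilon_1,\alpha)$-complete with respect to $h$ if for every $d$, every $\bar g:\mathcal{X}\to\mathbb{R}^d$ with $I(q(x,h(x));\bar g(x))\le\epsilon_1$, and every $s:\mathbb{R}^d\to\mathcal{Y}$, $\mathbb{E}_x[\ell(s(\bar g(x)),h(x))]\ge\alpha$. Random variables $f_1(x)\in\mathcal{X}_1$, $f_2(x)\in\mathcal{X}_2$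 $\epsilon$-intersect if there are invertible functions $r_1:\mathcal{X}_1\to\mathcal{V}_1$, $r_2:\mathcal{X}_2\to\mathcal{V}_2$ with $r_1(f_1(x))=(e_1(x),u(x))$ and $r_2(f_2(x))=(e_2(x),u(x))$, where $I(e_i(x);f_j(x))\le\epsilon$ for $i\neq j\in\{1,2\}$; $u(x)$ is the $\epsilon$-intersection and $(e_1(x),u(x),e_2(x))$ the $\epsilon$-union of $f_1(x)$ and $f_2(x)$. *)

theory Defs
  imports "HOL-Probability.Probability"
begin

text \<open>It is the (possibly infinite) sum over the support of the joint law of
  p(a,b) log2 (p(a,b) / (p(a) p(b))), taken as (sum of positive parts) minus
  (sum of negative parts); the negative parts always have a finite sum.\<close>
definition mutual_info :: "'x pmf \<Rightarrow> ('x \<Rightarrow> 'a) \<Rightarrow> ('x \<Rightarrow> 'b) \<Rightarrow> ereal" where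
  "mutual_info D f g =
    (let J = map_pmf (\<lambda>x. (f x, g x)) D;
         P = map_pmf f D;
         Q = map_pmf g D;
         t = (\<lambda>z. pmf J z * log 2 (pmf J z / (pmf P (fst z) * pmf Q (snd z))))
     in enn2ereal (\<integral>\<^sup>+ z. ennreal (max 0 (t z)) \<partial>count_space UNIV)
        - enn2ereal (\<integral>\<^sup>+ z. ennreal (max 0 (- t z)) \<partial>count_space UNIV))"

text \<open>Labels are Y = {-1, 1} (as integers); l is the loss on Y x Y.
  An explanation q is a function of (x, h(x)).\<close>
definition valid ::
  "'x pmf \<Rightarrow> (int \<Rightarrow> int \<Rightarrow> real) \<Rightarrow> ('x \<Rightarrow> int) \<Rightarrow> real \<Rightarrow> ('x \<Rightarrow> int \<Rightarrow> 'q) \<Rightarrow> bool" where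
  "valid D l h eps0 q \<longleftrightarrow>
     (\<exists>t :: 'q \<Rightarrow> int. (\<forall>z. t z \<in> {-1, 1}) \<and>
        measure_pmf.expectation D (\<lambda>x. l (t (q x (h x))) (h x)) \<le> eps0)"

text \<open>Completeness: every gbar : X -> R^d (R^d rendered as real lists of length d)
  with I(q(x,h(x)); gbar(x)) \<le> eps1 and every s : R^d -> Y incur expected loss \<ge> alpha.\<close>
definition eps_complete ::
  "'x pmf \<Rightarrow> (int \<Rightarrow> int \<Rightarrow> real) \<Rightarrow> ('x \<Rightarrow> int) \<Rightarrow> real \<Rightarrow> real \<Rightarrow> ('x \<Rightarrow> int \<Rightarrow> 'q) \<Rightarrow> bool" where
  "eps_complete D l h eps1 alpha q \<longleftrightarrow>
     (\<forall>(d::nat) (gbar :: 'x \<Rightarrow> real list) (s :: real list \<Rightarrow> int).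
        (\<forall>x. length (gbar x) = d) \<longrightarrow> (\<forall>v. s v \<in> {-1, 1}) \<longrightarrow>
        mutual_info D (\<lambda>x. q x (h x)) gbar \<le> ereal eps1 \<longrightarrow>
        measure_pmf.expectation D (\<lambda>x. l (s (gbar x)) (h x)) \<ge> alpha)"

text \<open>f1(x), f2(x) eps-intersect, witnessed by invertible r1, r2 and the
  components e1, u, e2 (u is the eps-intersection, (e1,u,e2) the eps-union).\<close>
definition eps_intersect ::
  "'x pmf \<Rightarrow> real \<Rightarrow> ('x \<Rightarrow> 'a) \<Rightarrow> ('x \<Rightarrow> 'b) \<Rightarrow> ('a \<Rightarrow> 'e1 \<times> 'u) \<Rightarrow> ('b \<Rightarrow> 'e2 \<times> 'u)
   \<Rightarrow> ('x \<Rightarrow> 'e1) \<Rightarrow> ('x \<Rightarrow> 'u) \<Rightarrow> ('x \<Rightarrow> 'e2) \<Rightarrow> bool" where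
  "eps_intersect D eps f1 f2 r1 r2 e1 u e2 \<longleftrightarrow>
     inj r1 \<and> inj r2 \<and>
     (\<forall>x\<in>set_pmf D. r1 (f1 x) = (e1 x, u x) \<and> r2 (f2 x) = (e2 x, u x)) \<and>
     mutual_info D e1 f2 \<le> ereal eps \<and> mutual_info D e2 f1 \<le> ereal eps"

end

theory Submission
  imports Defs
begin

lemma gibbs_pt:
  fixes p q :: real
  assumes p: "p \<ge> 0" and q: "q \<ge> 0" and pq: "p > 0 \<Longrightarrow> q > 0"
  shows "p * max 0 (- log 2 (p / q)) \<le> q / ln 2"
    and "p * max 0 (- log 2 (p / q)) + p / ln 2 \<le> p * max 0 (log 2 (p / q)) + q / ln 2"
proof -
  have l2: "ln 2 > (0::real)" by simp
  have key: "p * (- log 2 (p / q)) \<le> (q - p) / ln 2"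
  proof (cases "p = 0")
    case True then show ?thesis using q by simp
  next
    case False
    then have pp: "p > 0" using p by simp
    then have qq: "q > 0" using pq by simp
    have "ln (q / p) \<le> q / p - 1" using pp qq by (intro ln_le_minus_one) simp
    moreover have "- log 2 (p / q) = ln (q / p) / ln 2"
      using pp qq by (simp add: log_def ln_div minus_divide_left)
    ultimately have "- log 2 (p / q) \<le> (q / p - 1) / ln 2"
      using l2 by (simp add: divide_right_mono)
    then have "p * (- log 2 (p / q)) \<le> p * ((q / p - 1) / ln 2)"
      using pp by (intro mult_left_mono) auto
    also have "\<dots> = (q - p) / ln 2" using pp by (simp add: field_simps)
    finally show ?thesis .
  qed
  show "p * max 0 (- log 2 (p / q)) \<le> q / ln 2"
  proof (cases "- log 2 (p / q) \<ge> 0")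
    case True
    then have "p * max 0 (- log 2 (p / q)) = p * (- log 2 (p / q))" by simp
    also have "\<dots> \<le> (q - p) / ln 2" by (rule key)
    also have "\<dots> \<le> q / ln 2" using p l2 by (simp add: divide_right_mono)
    finally show ?thesis .
  next
    case False then show ?thesis using q l2 by simp
  qed
  have "p * max 0 (- log 2 (p / q)) - p * max 0 (log 2 (p / q)) = p * (- log 2 (p / q))"
    by (simp add: max_def algebra_simps)
  then show "p * max 0 (- log 2 (p / q)) + p / ln 2 \<le> p * max 0 (log 2 (p / q)) + q / ln 2"
    using key by (simp add: diff_divide_distrib)
qed

lemma pmf_sum_one: "(\<integral>\<^sup>+x. ennreal (pmf J x) \<partial>count_space UNIV) = 1"
  by (simp add: nn_integral_pmf measure_pmf.emeasure_space_1[simplified])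

lemma nn_pmf_real: "(\<integral>\<^sup>+x. ennreal (f x) \<partial>measure_pmf J) = (\<integral>\<^sup>+x. ennreal (pmf J x * f x) \<partial>count_space UNIV)"
  if "\<And>x. f x \<ge> 0" for f :: "'a \<Rightarrow> real"
  using that by (simp add: nn_integral_measure_pmf ennreal_mult)

lemma gibbs:
  fixes J :: "'a pmf" and q :: "'a \<Rightarrow> real"
  assumes q0: "\<And>x. q x \<ge> 0" and qsum: "(\<integral>\<^sup>+x. ennreal (q x) \<partial>count_space UNIV) \<le> 1"
    and qpos: "\<And>x. x \<in> set_pmf J \<Longrightarrow> q x > 0"
  shows "(\<integral>\<^sup>+x. ennreal (max 0 (- log 2 (pmf J x / q x))) \<partial>J) \<le> ennreal (1 / ln 2)"
    and "(\<integral>\<^sup>+x. ennreal (max 0 (- log 2 (pmf J x / q x))) \<partial>J)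
         \<le> (\<integral>\<^sup>+x. ennreal (max 0 (log 2 (pmf J x / q x))) \<partial>J)"
proof -
  have pq: "pmf J x > 0 \<Longrightarrow> q x > 0" for x using qpos by (simp add: set_pmf_iff)
  note pt = gibbs_pt[OF pmf_nonneg q0 pq]
  have qs: "(\<integral>\<^sup>+x. ennreal (q x / ln 2) \<partial>count_space UNIV) \<le> ennreal (1 / ln 2)"
  proof -
    have "(\<integral>\<^sup>+x. ennreal (q x / ln 2) \<partial>count_space UNIV)
        = (\<integral>\<^sup>+x. ennreal (q x) * ennreal (1 / ln 2) \<partial>count_space UNIV)"
      using q0 by (intro nn_integral_cong) (simp add: ennreal_mult[symmetric])
    also have "\<dots> = (\<integral>\<^sup>+x. ennreal (q x) \<partial>count_space UNIV) * ennreal (1 / ln 2)"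
      by (simp add: nn_integral_multc)
    also have "\<dots> \<le> 1 * ennreal (1 / ln 2)" using qsum by (intro mult_right_mono) auto
    finally show ?thesis by simp
  qed
  have "(\<integral>\<^sup>+x. ennreal (max 0 (- log 2 (pmf J x / q x))) \<partial>J)
      = (\<integral>\<^sup>+x. ennreal (pmf J x * max 0 (- log 2 (pmf J x / q x))) \<partial>count_space UNIV)"
    by (rule nn_pmf_real) simp
  also have "\<dots> \<le> (\<integral>\<^sup>+x. ennreal (q x / ln 2) \<partial>count_space UNIV)"
    by (intro nn_integral_mono ennreal_leI pt(1))
  also have "\<dots> \<le> ennreal (1 / ln 2)" by (rule qs)
  finally show "(\<integral>\<^sup>+x. ennreal (max 0 (- log 2 (pmf J x / q x))) \<partial>J) \<le> ennreal (1 / ln 2)" .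
  have pl: "(\<integral>\<^sup>+x. ennreal (pmf J x / ln 2) \<partial>count_space UNIV) = ennreal (1 / ln 2)"
  proof -
    have "(\<integral>\<^sup>+x. ennreal (pmf J x / ln 2) \<partial>count_space UNIV)
        = (\<integral>\<^sup>+x. ennreal (pmf J x) * ennreal (1 / ln 2) \<partial>count_space UNIV)"
      by (intro nn_integral_cong) (simp add: ennreal_mult[symmetric])
    also have "\<dots> = ennreal (1 / ln 2)" by (simp add: nn_integral_multc pmf_sum_one)
    finally show ?thesis .
  qed
  have "(\<integral>\<^sup>+x. ennreal (max 0 (- log 2 (pmf J x / q x))) \<partial>J) + ennreal (1 / ln 2)
      = (\<integral>\<^sup>+x. ennreal (pmf J x * max 0 (- log 2 (pmf J x / q x))) \<partial>count_space UNIV)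
        + (\<integral>\<^sup>+x. ennreal (pmf J x / ln 2) \<partial>count_space UNIV)"
    unfolding pl by (subst nn_pmf_real[where f="\<lambda>x. max 0 (- log 2 (pmf J x / q x))"]) (rule max.cobounded1, rule refl)
  also have "\<dots> = (\<integral>\<^sup>+x. ennreal (pmf J x * max 0 (- log 2 (pmf J x / q x)) + pmf J x / ln 2) \<partial>count_space UNIV)"
    by (subst nn_integral_add[symmetric]) (auto intro!: nn_integral_cong simp: q0)
  also have "\<dots> \<le> (\<integral>\<^sup>+x. ennreal (pmf J x * max 0 (log 2 (pmf J x / q x)) + q x / ln 2) \<partial>count_space UNIV)"
    by (intro nn_integral_mono ennreal_leI pt(2))
  also have "\<dots> = (\<integral>\<^sup>+x. ennreal (pmf J x * max 0 (log 2 (pmf J x / q x))) \<partial>count_space UNIV)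
        + (\<integral>\<^sup>+x. ennreal (q x / ln 2) \<partial>count_space UNIV)"
    using q0 by (subst nn_integral_add[symmetric]) (auto intro!: nn_integral_cong simp: q0)
  also have "\<dots> \<le> (\<integral>\<^sup>+x. ennreal (max 0 (log 2 (pmf J x / q x))) \<partial>J) + ennreal (1 / ln 2)"
    by (intro add_mono qs, subst nn_pmf_real[where f="\<lambda>x. max 0 (log 2 (pmf J x / q x))"]) (rule max.cobounded1, rule order.refl)
  finally show "(\<integral>\<^sup>+x. ennreal (max 0 (- log 2 (pmf J x / q x))) \<partial>J)
         \<le> (\<integral>\<^sup>+x. ennreal (max 0 (log 2 (pmf J x / q x))) \<partial>J)"
    by (simp add: ennreal_add_left_cancel_le add.commute)
qed

definition LL :: "('a \<times> 'b) pmf \<Rightarrow> 'a \<times> 'b \<Rightarrow> real" where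
  "LL J z = log 2 (pmf J z / (pmf (map_pmf fst J) (fst z) * pmf (map_pmf snd J) (snd z)))"

definition Pos :: "('a \<times> 'b) pmf \<Rightarrow> ennreal" where
  "Pos J = (\<integral>\<^sup>+z. ennreal (max 0 (LL J z)) \<partial>J)"

definition Neg :: "('a \<times> 'b) pmf \<Rightarrow> ennreal" where
  "Neg J = (\<integral>\<^sup>+z. ennreal (max 0 (- LL J z)) \<partial>J)"

lemma max_mult_pos: "p \<ge> 0 \<Longrightarrow> max 0 (p * L) = p * max 0 (L::real)"
  by (auto simp: max_def zero_le_mult_iff mult_le_0_iff)

lemma mi_eq: "mutual_info D f g =
  enn2ereal (Pos (map_pmf (\<lambda>x. (f x, g x)) D)) - enn2ereal (Neg (map_pmf (\<lambda>x. (f x, g x)) D))"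
proof -
  let ?J = "map_pmf (\<lambda>x. (f x, g x)) D"
  have m1: "map_pmf fst ?J = map_pmf f D" by (simp add: pmf.map_comp o_def)
  have m2: "map_pmf snd ?J = map_pmf g D" by (simp add: pmf.map_comp o_def)
  have "Pos ?J = (\<integral>\<^sup>+z. ennreal (pmf ?J z * max 0 (LL ?J z)) \<partial>count_space UNIV)"
    unfolding Pos_def by (rule nn_pmf_real) simp
  also have "\<dots> = (\<integral>\<^sup>+z. ennreal (max 0 (pmf ?J z * log 2 (pmf ?J z / (pmf (map_pmf f D) (fst z) * pmf (map_pmf g D) (snd z))))) \<partial>count_space UNIV)"
    by (intro nn_integral_cong) (simp add: max_mult_pos LL_def m1 m2)
  finally have P: "Pos ?J = \<dots>" .
  have "Neg ?J = (\<integral>\<^sup>+z. ennreal (pmf ?J z * max 0 (- LL ?J z)) \<partial>count_space UNIV)"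
    unfolding Neg_def by (rule nn_pmf_real) simp
  also have "\<dots> = (\<integral>\<^sup>+z. ennreal (max 0 (- (pmf ?J z * log 2 (pmf ?J z / (pmf (map_pmf f D) (fst z) * pmf (map_pmf g D) (snd z)))))) \<partial>count_space UNIV)"
    by (intro nn_integral_cong) (simp add: max_mult_pos[symmetric] LL_def m1 m2)
  finally have N: "Neg ?J = \<dots>" .
  show ?thesis unfolding mutual_info_def Let_def P N ..
qed

lemma pmf_pos_fst: "x \<in> set_pmf J \<Longrightarrow> pmf (map_pmf fst J) (fst x) > 0"
  by (metis pmf_positive set_map_pmf imageI)

lemma pmf_pos_snd: "x \<in> set_pmf J \<Longrightarrow> pmf (map_pmf snd J) (snd x) > 0"
  by (metis pmf_positive set_map_pmf imageI)

lemma Neg_fin: "Neg J \<le> ennreal (1 / ln 2)"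
proof -
  let ?N = "pair_pmf (map_pmf fst J) (map_pmf snd J)"
  have "Neg J = (\<integral>\<^sup>+x. ennreal (max 0 (- log 2 (pmf J x / pmf ?N x))) \<partial>J)"
    unfolding Neg_def LL_def by (intro nn_integral_cong) (auto simp: pmf_pair split: prod.splits)
  also have "\<dots> \<le> ennreal (1 / ln 2)"
  proof (rule gibbs(1))
    show "(\<integral>\<^sup>+x. ennreal (pmf ?N x) \<partial>count_space UNIV) \<le> 1" by (simp add: pmf_sum_one)
    fix x assume "x \<in> set_pmf J"
    then show "pmf ?N x > 0"
      using pmf_pos_fst[of x J] pmf_pos_snd[of x J] by (cases x) (simp add: pmf_pair)
  qed simp
  finally show ?thesis .
qed

lemma pmfN:
  fixes J :: "('a \<times> 'b) pmf" and \<phi> :: "'a \<Rightarrow> 'c" and z' :: 'a and y' :: 'b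
  assumes x: "(z', y') \<in> set_pmf J"
  shows "pmf (bind_pmf J (\<lambda>(z,y). map_pmf (\<lambda>z''. (z'',y)) (cond_pmf (map_pmf fst J) {z''. \<phi> z'' = \<phi> z}))) (z', y')
    = pmf (map_pmf fst J) z' * pmf (map_pmf (\<lambda>(z,y). (\<phi> z, y)) J) (\<phi> z', y')
      / pmf (map_pmf \<phi> (map_pmf fst J)) (\<phi> z')"
proof -
  define P where "P = map_pmf fst J"
  define S where "S = (\<lambda>z. {z''. \<phi> z'' = \<phi> z})"
  define A where "A = {(z::'a, y::'b). \<phi> z = \<phi> z' \<and> y = y'}"
  define c where "c = pmf P z' / measure P (S z')"
  have c0: "c \<ge> 0" unfolding c_def by simp
  have ne: "set_pmf P \<inter> S z \<noteq> {}" if "(z, y) \<in> set_pmf J" for z y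
    using that unfolding P_def S_def by (auto simp: set_map_pmf intro!: exI[of _ z] image_eqI[of _ _ "(z,y)"])
  have pt: "pmf (map_pmf (\<lambda>z''. (z'',y)) (cond_pmf P (S z))) (z', y') = indicator A (z, y) * c"
    if zy: "(z, y) \<in> set_pmf J" for z y
  proof (cases "y = y'")
    case True
    have inj: "inj (\<lambda>z''. (z'',y))" by (auto intro: injI)
    have "pmf (map_pmf (\<lambda>z''. (z'',y)) (cond_pmf P (S z))) (z', y') = pmf (cond_pmf P (S z)) z'"
      using pmf_map_inj'[OF inj] True by simp
    also have "\<dots> = (if z' \<in> S z then pmf P z' / measure P (S z) else 0)"
      by (rule pmf_cond[OF ne[OF zy]])
    also have "\<dots> = indicator A (z, y) * c"
      using True unfolding A_def c_def S_def by (auto simp: indicator_def)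
    finally show ?thesis .
  next
    case False
    have "(z', y') \<notin> (\<lambda>z''. (z'',y)) ` set_pmf (cond_pmf P (S z))" using False by auto
    then show ?thesis using False by (simp add: pmf_map_outside A_def indicator_def)
  qed
  have "ennreal (pmf (bind_pmf J (\<lambda>(z,y). map_pmf (\<lambda>z''. (z'',y)) (cond_pmf P (S z)))) (z', y'))
      = (\<integral>\<^sup>+w. ennreal (pmf (map_pmf (\<lambda>z''. (z'',snd w)) (cond_pmf P (S (fst w)))) (z', y')) \<partial>J)"
    by (simp add: ennreal_pmf_bind split_beta)
  also have "\<dots> = (\<integral>\<^sup>+w. ennreal c * indicator A w \<partial>J)"
    by (intro nn_integral_cong_AE AE_pmfI) (auto simp: pt c0 indicator_def)
  also have "\<dots> = ennreal c * emeasure J A" by (simp add: nn_integral_cmult_indicator)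
  also have "emeasure J A = ennreal (pmf (map_pmf (\<lambda>(z,y). (\<phi> z, y)) J) (\<phi> z', y'))"
  proof -
    have "(\<lambda>(z,y). (\<phi> z, y)) -` {(\<phi> z', y')} = A" unfolding A_def by auto
    then show ?thesis by (simp add: ennreal_pmf_map nn_integral_indicator)
  qed
  finally have eq1: "ennreal (pmf (bind_pmf J (\<lambda>(z,y). map_pmf (\<lambda>z''. (z'',y)) (cond_pmf P (S z)))) (z', y'))
     = ennreal c * ennreal (pmf (map_pmf (\<lambda>(z,y). (\<phi> z, y)) J) (\<phi> z', y'))" .
  have ms: "measure P (S z') = pmf (map_pmf \<phi> P) (\<phi> z')"
    unfolding S_def by (simp add: pmf_map vimage_def)
  have "ennreal (pmf (bind_pmf J (\<lambda>(z,y). map_pmf (\<lambda>z''. (z'',y)) (cond_pmf P (S z)))) (z', y'))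
      = ennreal (pmf P z' * pmf (map_pmf (\<lambda>(z,y). (\<phi> z, y)) J) (\<phi> z', y') / pmf (map_pmf \<phi> P) (\<phi> z'))"
    unfolding eq1 c_def ms by (simp add: ennreal_mult[symmetric] S_def)
  then show ?thesis unfolding P_def S_def by (subst (asm) ennreal_inj) auto
qed

lemma ennreal_final:
  fixes PW NW PZ NZ Cp Cm :: ennreal
  assumes e: "PW + NZ + Cp = NW + PZ + Cm" and cm: "Cm \<le> Cp" and cp: "Cp \<le> PZ + NW"
    and nz: "NZ < \<top>" and nw: "NW < \<top>"
  shows "enn2ereal PW - enn2ereal NW \<le> enn2ereal PZ - enn2ereal NZ"
proof (cases "PZ = \<top>")
  case True
  then show ?thesis using nz by (cases NZ rule: ennreal_cases) auto
next
  case False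
  then have pz: "PZ < \<top>" by (simp add: less_top)
  have "PZ + NW < \<top>" using pz nw by simp
  then have cpf: "Cp < \<top>" using cp by (rule le_less_trans[rotated])
  have "PW + NZ + Cp \<le> NW + PZ + Cp" using e cm by (simp add: add_left_mono)
  moreover have "Cp \<noteq> \<top>" using cpf by simp
  ultimately have le: "PW + NZ \<le> NW + PZ"
    by (simp add: ennreal_add_left_cancel_le add.commute[of _ Cp])
  then have pw: "PW < \<top>" using pz nw
    by (metis ennreal_add_eq_top le_iff_add less_top)
  obtain pw where "PW = ennreal pw" "pw \<ge> 0" using pw by (cases PW rule: ennreal_cases) auto
  moreover obtain nw' where "NW = ennreal nw'" "nw' \<ge> 0" using nw by (cases NW rule: ennreal_cases) auto
  moreover obtain pz' where "PZ = ennreal pz'" "pz' \<ge> 0" using pz by (cases PZ rule: ennreal_cases) auto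
  moreover obtain nz' where "NZ = ennreal nz'" "nz' \<ge> 0" using nz by (cases NZ rule: ennreal_cases) auto
  ultimately show ?thesis using le by (auto simp: ennreal_plus[symmetric] ennreal_le_iff simp del: ennreal_plus)
qed

lemma dpi:
  fixes J :: "('a \<times> 'b) pmf" and \<phi> :: "'a \<Rightarrow> 'c"
  shows "enn2ereal (Pos (map_pmf (\<lambda>(z,y). (\<phi> z, y)) J)) - enn2ereal (Neg (map_pmf (\<lambda>(z,y). (\<phi> z, y)) J))
         \<le> enn2ereal (Pos J) - enn2ereal (Neg J)"
proof -
  define JW where "JW = map_pmf (\<lambda>(z,y). (\<phi> z, y)) J"
  define N where "N = bind_pmf J (\<lambda>(z,y). map_pmf (\<lambda>z''. (z'',y)) (cond_pmf (map_pmf fst J) {z''. \<phi> z'' = \<phi> z}))"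
  define a where "a = (\<lambda>w. LL JW (\<phi> (fst w), snd w))"
  define b where "b = LL J"
  have PW: "Pos JW = (\<integral>\<^sup>+w. ennreal (max 0 (a w)) \<partial>J)"
    unfolding Pos_def a_def by (simp add: JW_def split_beta)
  have NW: "Neg JW = (\<integral>\<^sup>+w. ennreal (max 0 (- a w)) \<partial>J)"
    unfolding Neg_def a_def by (simp add: JW_def split_beta)
  have PZ: "Pos J = (\<integral>\<^sup>+w. ennreal (max 0 (b w)) \<partial>J)" unfolding Pos_def b_def ..
  have NZ: "Neg J = (\<integral>\<^sup>+w. ennreal (max 0 (- b w)) \<partial>J)" unfolding Neg_def b_def ..
  have mf: "map_pmf fst JW = map_pmf \<phi> (map_pmf fst J)"
    unfolding JW_def by (simp add: pmf.map_comp o_def split_beta)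
  have ms: "map_pmf snd JW = map_pmf snd J"
    unfolding JW_def by (simp add: pmf.map_comp o_def split_beta)
  have key: "b w - a w = log 2 (pmf J w / pmf N w) \<and> pmf N w > 0" if w: "w \<in> set_pmf J" for w
  proof -
    obtain z y where zy: "w = (z, y)" by (cases w)
    have p1: "pmf J (z,y) > 0" using w zy by (simp add: pmf_positive)
    have p2: "pmf (map_pmf fst J) z > 0" using pmf_pos_fst[OF w] zy by simp
    have p3: "pmf (map_pmf snd J) y > 0" using pmf_pos_snd[OF w] zy by simp
    have wW: "(\<phi> z, y) \<in> set_pmf JW" using w zy unfolding JW_def by (auto simp: set_map_pmf)
    have p4: "pmf JW (\<phi> z, y) > 0" using wW by (simp add: pmf_positive)
    have p5: "pmf (map_pmf \<phi> (map_pmf fst J)) (\<phi> z) > 0" using pmf_pos_fst[OF wW] mf by simp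
    have Nw: "pmf N (z, y) = pmf (map_pmf fst J) z * pmf JW (\<phi> z, y) / pmf (map_pmf \<phi> (map_pmf fst J)) (\<phi> z)"
      unfolding N_def JW_def by (rule pmfN) (use w zy in simp)
    have "b w - a w = log 2 (pmf J (z,y) / (pmf (map_pmf fst J) z * pmf (map_pmf snd J) y))
        - log 2 (pmf JW (\<phi> z, y) / (pmf (map_pmf \<phi> (map_pmf fst J)) (\<phi> z) * pmf (map_pmf snd J) y))"
      unfolding a_def b_def LL_def zy mf ms by simp
    also have "\<dots> = log 2 ((pmf J (z,y) / (pmf (map_pmf fst J) z * pmf (map_pmf snd J) y))
        / (pmf JW (\<phi> z, y) / (pmf (map_pmf \<phi> (map_pmf fst J)) (\<phi> z) * pmf (map_pmf snd J) y)))"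
      using p1 p2 p3 p4 p5 by (subst log_divide) auto
    also have "\<dots> = log 2 (pmf J w / pmf N w)"
      unfolding zy Nw using p1 p2 p3 p4 p5 by (simp add: field_simps)
    finally show ?thesis using Nw p2 p4 p5 zy by simp
  qed
  define Cp where "Cp = (\<integral>\<^sup>+w. ennreal (max 0 (b w - a w)) \<partial>J)"
  define Cm where "Cm = (\<integral>\<^sup>+w. ennreal (max 0 (- (b w - a w))) \<partial>J)"
  have g: "(\<integral>\<^sup>+x. ennreal (max 0 (- log 2 (pmf J x / pmf N x))) \<partial>J)
         \<le> (\<integral>\<^sup>+x. ennreal (max 0 (log 2 (pmf J x / pmf N x))) \<partial>J)"
    by (rule gibbs(2)) (auto simp: pmf_sum_one key)
  have cm: "Cm \<le> Cp"
  proof -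
    have "Cm = (\<integral>\<^sup>+x. ennreal (max 0 (- log 2 (pmf J x / pmf N x))) \<partial>J)"
      unfolding Cm_def by (intro nn_integral_cong_AE AE_pmfI) (simp add: key)
    moreover have "Cp = (\<integral>\<^sup>+x. ennreal (max 0 (log 2 (pmf J x / pmf N x))) \<partial>J)"
      unfolding Cp_def by (intro nn_integral_cong_AE AE_pmfI) (simp add: key)
    ultimately show ?thesis using g by simp
  qed
  have e: "Pos JW + Neg J + Cp = Neg JW + Pos J + Cm"
  proof -
    have pt: "ennreal (max 0 (a w)) + ennreal (max 0 (- b w)) + ennreal (max 0 (b w - a w))
       = ennreal (max 0 (- a w)) + ennreal (max 0 (b w)) + ennreal (max 0 (- (b w - a w)))" for w
    proof -
      have eq: "max 0 (a w) + max 0 (- b w) + max 0 (b w - a w) = max 0 (- a w) + max 0 (b w) + max 0 (- (b w - a w))"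
        by (simp add: max_def)
      have h: "\<And>A B C::real. A\<ge>0 \<Longrightarrow> B\<ge>0 \<Longrightarrow> C\<ge>0 \<Longrightarrow> ennreal A + ennreal B + ennreal C = ennreal (A+B+C)"
        by (simp add: ennreal_plus)
      show ?thesis unfolding h[OF max.cobounded1 max.cobounded1 max.cobounded1] eq ..
    qed
    have "Pos JW + Neg J + Cp = (\<integral>\<^sup>+w. ennreal (max 0 (a w)) + ennreal (max 0 (- b w)) + ennreal (max 0 (b w - a w)) \<partial>J)"
      unfolding PW NZ Cp_def by (simp add: nn_integral_add)
    also have "\<dots> = (\<integral>\<^sup>+w. ennreal (max 0 (- a w)) + ennreal (max 0 (b w)) + ennreal (max 0 (- (b w - a w))) \<partial>J)"
      by (simp only: pt)
    also have "\<dots> = Neg JW + Pos J + Cm"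
      unfolding NW PZ Cm_def by (simp add: nn_integral_add)
    finally show ?thesis .
  qed
  have cp: "Cp \<le> Pos J + Neg JW"
  proof -
    have "Cp \<le> (\<integral>\<^sup>+w. ennreal (max 0 (b w)) + ennreal (max 0 (- a w)) \<partial>J)"
      unfolding Cp_def
    proof (intro nn_integral_mono)
      fix w
      have h: "\<And>A B::real. A\<ge>0 \<Longrightarrow> B\<ge>0 \<Longrightarrow> ennreal A + ennreal B = ennreal (A+B)"
        by (simp add: ennreal_plus)
      show "ennreal (max 0 (b w - a w)) \<le> ennreal (max 0 (b w)) + ennreal (max 0 (- a w))"
        unfolding h[OF max.cobounded1 max.cobounded1] by (rule ennreal_leI) (simp add: max_def)
    qed
    also have "\<dots> = Pos J + Neg JW" unfolding PZ NW by (simp add: nn_integral_add)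
    finally show ?thesis .
  qed
  have fin: "Neg J < \<top>" "Neg JW < \<top>"
    using Neg_fin[of J] Neg_fin[of JW] by (auto simp: order_le_less_trans)
  show ?thesis unfolding JW_def[symmetric]
    by (rule ennreal_final[OF e cm cp fin])
qed

lemma mi_dpi: "mutual_info D (\<lambda>x. \<phi> (f x)) g \<le> mutual_info D f g"
proof -
  have "map_pmf (\<lambda>x. (\<phi> (f x), g x)) D = map_pmf (\<lambda>(z,y). (\<phi> z, y)) (map_pmf (\<lambda>x. (f x, g x)) D)"
    by (simp add: pmf.map_comp o_def)
  then show ?thesis unfolding mi_eq by (simp only: dpi)
qed

lemma mi_cong: "(\<And>x. x \<in> set_pmf D \<Longrightarrow> f x = f' x) \<Longrightarrow> mutual_info D f g = mutual_info D f' g"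
proof -
  assume "\<And>x. x \<in> set_pmf D \<Longrightarrow> f x = f' x"
  then have "map_pmf (\<lambda>x. (f x, g x)) D = map_pmf (\<lambda>x. (f' x, g x)) D"
    by (intro map_pmf_cong) auto
  then show ?thesis unfolding mi_eq by simp
qed

theorem lemma1:
  fixes D :: "(real ^ 'n) pmf"
    and l :: "int \<Rightarrow> int \<Rightarrow> real"
    and h :: "real ^ 'n \<Rightarrow> int"
    and g1 g2 :: "real ^ 'n \<Rightarrow> int \<Rightarrow> 'g"
    and r1 :: "'g \<Rightarrow> 'e1 \<times> 'u" and r2 :: "'g \<Rightarrow> 'e2 \<times> 'u"
    and e1 :: "real ^ 'n \<Rightarrow> 'e1" and u :: "real ^ 'n \<Rightarrow> 'u" and e2 :: "real ^ 'n \<Rightarrow> 'e2"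
    and eps eps0 eps1 alpha :: real
  assumes "\<forall>x. h x \<in> {-1, 1}"
    and "eps > 0" and "eps0 > 0" and "eps1 > 0" and "alpha > 0"
    and "eps_intersect D eps (\<lambda>x. g1 x (h x)) (\<lambda>x. g2 x (h x)) r1 r2 e1 u e2"
  shows "(valid D l h eps0 g1 \<or> valid D l h eps0 g2
            \<longrightarrow> valid D l h eps0 (\<lambda>x y. (e1 x, u x, e2 x))) \<and>
         (eps_complete D l h eps1 alpha g1 \<or> eps_complete D l h eps1 alpha g2
            \<longrightarrow> eps_complete D l h eps1 alpha (\<lambda>x y. (e1 x, u x, e2 x)))"
proof -
  from assms(6) have inj1: "inj r1" and inj2: "inj r2"
    and sup: "\<And>x. x \<in> set_pmf D \<Longrightarrow> r1 (g1 x (h x)) = (e1 x, u x) \<and> r2 (g2 x (h x)) = (e2 x, u x)"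
    unfolding eps_intersect_def by auto
  define \<phi>1 where "\<phi>1 = (\<lambda>(a::'e1, b::'u, c::'e2). inv r1 (a, b))"
  define \<phi>2 where "\<phi>2 = (\<lambda>(a::'e1, b::'u, c::'e2). inv r2 (c, b))"
  have s1: "g1 x (h x) = \<phi>1 (e1 x, u x, e2 x)" if "x \<in> set_pmf D" for x
    using sup[OF that] inj1 unfolding \<phi>1_def by (metis case_prod_conv inv_f_f)
  have s2: "g2 x (h x) = \<phi>2 (e1 x, u x, e2 x)" if "x \<in> set_pmf D" for x
    using sup[OF that] inj2 unfolding \<phi>2_def by (metis case_prod_conv inv_f_f)
  have val: "valid D l h eps0 (\<lambda>x y. (e1 x, u x, e2 x))"
    if "valid D l h eps0 g" and sg: "\<And>x. x \<in> set_pmf D \<Longrightarrow> g x (h x) = \<phi> (e1 x, u x, e2 x)"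
    for g :: "real ^ 'n \<Rightarrow> int \<Rightarrow> 'g" and \<phi>
  proof -
    from that(1) obtain t :: "'g \<Rightarrow> int" where t1: "\<forall>z. t z \<in> {-1, 1}"
      and t2: "measure_pmf.expectation D (\<lambda>x. l (t (g x (h x))) (h x)) \<le> eps0"
      unfolding valid_def by blast
    have "measure_pmf.expectation D (\<lambda>x. l ((t \<circ> \<phi>) (e1 x, u x, e2 x)) (h x))
        = measure_pmf.expectation D (\<lambda>x. l (t (g x (h x))) (h x))"
      by (intro integral_cong_AE AE_pmfI) (auto simp: sg)
    then show ?thesis unfolding valid_def using t1 t2
      by (intro exI[of _ "t \<circ> \<phi>"]) auto
  qed
  have comp: "eps_complete D l h eps1 alpha (\<lambda>x y. (e1 x, u x, e2 x))"
    if "eps_complete D l h eps1 alpha g" and sg: "\<And>x. x \<in> set_pmf D \<Longrightarrow> g x (h x) = \<phi> (e1 x, u x, e2 x)"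
    for g :: "real ^ 'n \<Rightarrow> int \<Rightarrow> 'g" and \<phi>
    unfolding eps_complete_def
  proof (intro allI impI)
    fix d and gbar :: "real ^ 'n \<Rightarrow> real list" and s :: "real list \<Rightarrow> int"
    assume a1: "\<forall>x. length (gbar x) = d" and a2: "\<forall>v. s v \<in> {-1, 1}"
      and a3: "mutual_info D (\<lambda>x. (e1 x, u x, e2 x)) gbar \<le> ereal eps1"
    have "mutual_info D (\<lambda>x. g x (h x)) gbar = mutual_info D (\<lambda>x. \<phi> (e1 x, u x, e2 x)) gbar"
      by (rule mi_cong) (rule sg)
    also have "\<dots> \<le> mutual_info D (\<lambda>x. (e1 x, u x, e2 x)) gbar" by (rule mi_dpi)
    also have "\<dots> \<le> ereal eps1" by (rule a3)
    finally show "measure_pmf.expectation D (\<lambda>x. l (s (gbar x)) (h x)) \<ge> alpha"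
      using that(1) a1 a2 unfolding eps_complete_def by blast
  qed
  show ?thesis using val[of g1 \<phi>1] val[of g2 \<phi>2] comp[of g1 \<phi>1] comp[of g2 \<phi>2] s1 s2 by blast
qed

end
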